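(* For each integer $n\ge3$ there exist finite rooted binary trees $T_1,T_2$, each with $n$ nodes, such that the right-arm rotation distance between them satisfies $d_{RA}(T_1,T_2)=2n-2$.
   Context: Trees: finite rooted binary trees, each internal vertex (node) having a left and a right child. The right arm consists of the root and all nodes reachable from the root by a path of right edges. Right rotation at a node $N$ whose left child $M$ is a node (with $A,B$ the left and right subtrees of $M$, $C$ the right subtree of $N$) replaces the subtree at $N$ by one whose root has left subtree $A$ and right child a node with left subtree $B$ and right subtree $C$; left rotation at $N$ is the inverse operation. The right-arm rotation distance $d_{RA}(T_1,T_2)$ is the minimal number of rotations, each performed at a node on the right arm, needed to transform $T_1$ into $T_2$. *)

theory Defs
  imports Main "HOL-Library.Extended_Nat"
begin

datatype btree = Leaf | Node btree btree

fun nodes :: "btree \<Rightarrow> nat" where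
  "nodes Leaf = 0"
| "nodes (Node l r) = Suc (nodes l + nodes r)"

text \<open>One rotation (right or left) performed at a node on the right arm.
  The right arm consists of the root and nodes reachable via right edges,
  hence the recursion into the right subtree only.\<close>
inductive ra_step :: "btree \<Rightarrow> btree \<Rightarrow> bool" where
  rot_right: "ra_step (Node (Node A B) C) (Node A (Node B C))"
| rot_left:  "ra_step (Node A (Node B C)) (Node (Node A B) C)"
| arm:       "ra_step R R' \<Longrightarrow> ra_step (Node L R) (Node L R')"

definition d_RA :: "btree \<Rightarrow> btree \<Rightarrow> enat" where
  "d_RA T1 T2 = (if \<exists>k. (ra_step ^^ k) T1 T2
                 then enat (LEAST k. (ra_step ^^ k) T1 T2) else \<infinity>)"

end

theory Submission
  imports Defs
begin

fun rc :: "nat \<Rightarrow> btree" where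
  "rc 0 = Leaf" | "rc (Suc k) = Node Leaf (rc k)"
fun lc :: "nat \<Rightarrow> btree" where
  "lc 0 = Leaf" | "lc (Suc k) = Node (lc k) Leaf"
fun lsp :: "btree \<Rightarrow> nat" where
  "lsp Leaf = 0" | "lsp (Node l r) = Suc (lsp l)"
fun rsp :: "btree \<Rightarrow> nat" where
  "rsp Leaf = 0" | "rsp (Node l r) = Suc (rsp r)"
fun fstl :: "btree \<Rightarrow> btree" where
  "fstl Leaf = Leaf" | "fstl (Node l r) = l"
fun lastl :: "btree \<Rightarrow> btree" where
  "lastl Leaf = Leaf"
| "lastl (Node l Leaf) = l"
| "lastl (Node l (Node a b)) = lastl (Node a b)"
definition phi :: "btree \<Rightarrow> int" where
  "phi t = int (lsp (fstl t)) - int (rsp (lastl t))"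

fun armp :: "btree list \<Rightarrow> btree \<Rightarrow> btree" where
  "armp [] t = t" | "armp (x # xs) t = Node x (armp xs t)"

lemma nodes_rc[simp]: "nodes (rc k) = k" by (induction k) auto
lemma nodes_lc[simp]: "nodes (lc k) = k" by (induction k) auto
lemma rsp_rc[simp]: "rsp (rc k) = k" by (induction k) auto
lemma lsp_lc[simp]: "lsp (lc k) = k" by (induction k) auto

lemma no_step_Leaf[simp]: "\<not> ra_step Leaf t"
  by (auto elim: ra_step.cases)
lemma no_step_to_Leaf[simp]: "\<not> ra_step t Leaf"
  by (auto elim: ra_step.cases)

lemma lastl_step:
  "ra_step a b \<Longrightarrow> rsp (lastl b) \<le> Suc (rsp (lastl a)) \<and> rsp (lastl a) \<le> Suc (rsp (lastl b))"
proof (induction rule: ra_step.induct)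
  case (rot_right A B C)
  then show ?case by (cases C) auto
next
  case (rot_left A B C)
  then show ?case by (cases C) auto
next
  case (arm R R' L)
  then show ?case
    by (cases R; cases R') auto
qed

lemma phi_step: assumes "ra_step a b" shows "phi b \<le> phi a + 1"
  using assms
proof cases
  case (rot_right A B C)
  then show ?thesis by (cases C) (auto simp: phi_def)
next
  case (rot_left A B C)
  then show ?thesis by (cases C) (auto simp: phi_def)
next
  case (arm R R' L)
  from arm(3) have "rsp (lastl R') \<le> Suc (rsp (lastl R)) \<and> rsp (lastl R) \<le> Suc (rsp (lastl R'))"
    by (rule lastl_step)
  with arm show ?thesis
    by (cases R; cases R') (auto simp: phi_def)
qed

lemma phi_pow: "(ra_step ^^ k) a b \<Longrightarrow> phi b \<le> phi a + int k"
proof (induction k arbitrary: b)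
  case 0
  then show ?case by auto
next
  case (Suc k)
  from Suc.prems obtain y where "(ra_step ^^ k) a y" "ra_step y b"
    by (rule relpowp_Suc_E)
  with Suc.IH[of y] phi_step[of y b] show ?case by auto
qed

lemma armp_step: "ra_step t t' \<Longrightarrow> ra_step (armp xs t) (armp xs t')"
  by (induction xs) (auto intro: ra_step.arm)

lemma armp_rep: "armp (replicate (Suc j) x) t = armp (replicate j x) (Node x t)"
  by (induction j) auto

lemma phase1:
  "(ra_step ^^ k) (armp (replicate j Leaf) (Node (rc k) Leaf))
                  (armp (replicate (j + k) Leaf) (Node Leaf Leaf))"
proof (induction k arbitrary: j)
  case 0
  then show ?case by simp
next
  case (Suc k)
  have "ra_step (armp (replicate j Leaf) (Node (rc (Suc k)) Leaf))
                (armp (replicate j Leaf) (Node Leaf (Node (rc k) Leaf)))"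
    by (auto intro: armp_step ra_step.rot_right)
  also have "armp (replicate j Leaf) (Node Leaf (Node (rc k) Leaf))
           = armp (replicate (Suc j) Leaf) (Node (rc k) Leaf)"
    by (simp only: armp_rep)
  finally show ?case using Suc.IH[of "Suc j"]
    by (metis add_Suc add_Suc_right relpowp_Suc_I2)
qed

lemma phase2:
  "(ra_step ^^ k) (Node (lc j) (armp (replicate k Leaf) Leaf)) (Node (lc (j + k)) Leaf)"
proof (induction k arbitrary: j)
  case 0
  then show ?case by simp
next
  case (Suc k)
  have "ra_step (Node (lc j) (armp (replicate (Suc k) Leaf) Leaf))
                (Node (lc (Suc j)) (armp (replicate k Leaf) Leaf))"
    by (auto intro: ra_step.rot_left)
  then show ?case using Suc.IH[of "Suc j"]
    by (metis add_Suc add_Suc_right relpowp_Suc_I2)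
qed

theorem theorem4p1:
  fixes n :: nat
  assumes "n \<ge> 3"
  shows "\<exists>T1 T2. nodes T1 = n \<and> nodes T2 = n \<and> d_RA T1 T2 = enat (2 * n - 2)"
proof -
  define m where "m = n - 1"
  have m2: "m \<ge> 2" and nm: "n = Suc m" using assms by (auto simp: m_def)
  define T1 where "T1 = Node (rc m) Leaf"
  define T2 where "T2 = Node (lc m) Leaf"
  have up: "(ra_step ^^ (m + m)) T1 T2"
  proof -
    have a: "(ra_step ^^ m) T1 (armp (replicate m Leaf) (Node Leaf Leaf))"
      using phase1[of m 0] by (simp add: T1_def)
    have "armp (replicate m Leaf) (Node Leaf Leaf) = Node (lc 0) (armp (replicate m Leaf) Leaf)"
      by (metis armp.simps lc.simps(1) armp_rep replicate_Suc)
    with phase2[of m 0] have b: "(ra_step ^^ m) (armp (replicate m Leaf) (Node Leaf Leaf)) T2"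
      by (simp add: T2_def)
    from relpowp_trans[OF a b] show ?thesis .
  qed
  obtain p where mp: "m = Suc p" and p1: "p \<ge> 1" using m2 by (cases m) auto
  define T1' where "T1' = Node Leaf (Node (rc p) Leaf)"
  define T2' where "T2' = Node (lc p) (Node Leaf Leaf)"
  have first: "ra_step T1 X \<Longrightarrow> X = T1'" for X
    unfolding T1_def T1'_def mp by (auto elim: ra_step.cases)
  have last: "ra_step Y T2 \<Longrightarrow> Y = T2'" for Y
    unfolding T2_def T2'_def mp by (auto elim: ra_step.cases)
  have ph1: "phi T1' = - int p" by (simp add: phi_def T1'_def)
  have ph2: "phi T2' = int p" by (simp add: phi_def T2'_def)
  have T12: "T1 \<noteq> T2" using p1 unfolding T1_def T2_def mp by (cases p) auto
  have T1'2: "T1' \<noteq> T2" unfolding T1'_def T2_def mp by auto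
  have low: "m + m \<le> k" if h: "(ra_step ^^ k) T1 T2" for k
  proof -
    obtain k1 where k1: "k = Suc k1"
      using h T12 by (cases k) auto
    from h[unfolded k1] obtain X where "ra_step T1 X" "(ra_step ^^ k1) X T2"
      by (rule relpowp_Suc_E2)
    with first have h1: "(ra_step ^^ k1) T1' T2" by auto
    obtain k2 where k2: "k1 = Suc k2"
      using h1 T1'2 by (cases k1) auto
    from h1[unfolded k2] obtain Y where "(ra_step ^^ k2) T1' Y" "ra_step Y T2"
      by (rule relpowp_Suc_E)
    with last have "(ra_step ^^ k2) T1' T2'" by auto
    from phi_pow[OF this] ph1 ph2 have "2 * p \<le> k2" by auto
    then show ?thesis using k1 k2 mp by auto
  qed
  have ex: "\<exists>k. (ra_step ^^ k) T1 T2" using up by blast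
  have "(LEAST k. (ra_step ^^ k) T1 T2) = m + m"
    by (rule Least_equality) (use up low in auto)
  then have "d_RA T1 T2 = enat (2 * n - 2)"
    using ex by (simp add: d_RA_def nm)
  moreover have "nodes T1 = n" "nodes T2 = n" by (simp_all add: T1_def T2_def nm)
  ultimately show ?thesis by blast
qed

end
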